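(* Let $M$ be a pointed metric space and let $\mathcal U$ be a countably incomplete ultrafilter on a set $I$. Let $T\colon(\mathrm{Lip}_0(M))_{\mathcal U}\rightarrow \mathrm{Lip}_0(M_{\mathcal U})$ be the operator given by $T((f_i)_{\mathcal U})((x_i)_{\mathcal U})=\lim_{\mathcal U,i}f_i(x_i)$. The following are equivalent: (i) $M$ is uniformly discrete and bounded; (ii) $T$ is injective; (iii) $T$ is an isometry.
   Context: An ultrafilter $\mathcal U$ on $I$ is countably incomplete if there is a sequence $(I_n)_{n\in\mathbb N}$ in $\mathcal U$ with $I_{n+1}\subset I_n$ and $\bigcap_n I_n=\emptyset$. Ultrapower of a metric space: for a metric space $(M,d)$ with base point $0$, let $\ell_\infty(M)=\{(x_i)_{i\in I}\in M^I:\sup_i d(x_i,0)<\infty\}$ with pseudometric $d((x_i),(y_i))=\lim_{\mathcal U,i}d(x_i,y_i)$; $M_{\mathcal U}$ is the metric quotient identifying points at distance $0$, classes written $(x_i)_{\mathcal U}$, pointed by $(0)_{\mathcal U}$. For a Banach space $X$, $X_{\mathcal U}$ is the usual Banach ultrapower (base point $0$), with norm $\|(x_i)_{\mathcal U}\|=\lim_{\mathcal U}\|x_i\|$. $\mathrm{Lip}_0(M)$ is the Banach space of real-valued Lipschitz functions on $M$ vanishing at $0$ with norm the Lipschitz constant. $M$ is uniformly discrete if $\inf\{d(x,y):x\neq y\}>0$. *)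

theory Defs
  imports "HOL-Analysis.Analysis"
begin

text \<open>An ultrafilter on the index set I, where I is the universe of the type 'i.\<close>
definition is_ultrafilter :: "'i filter \<Rightarrow> bool" where
  "is_ultrafilter F \<longleftrightarrow> F \<noteq> bot \<and>
     (\<forall>P. eventually P F \<or> eventually (\<lambda>i. \<not> P i) F)"

definition countably_incomplete :: "'i filter \<Rightarrow> bool" where
  "countably_incomplete F \<longleftrightarrow>
     (\<exists>A :: nat \<Rightarrow> 'i set. (\<forall>n. eventually (\<lambda>i. i \<in> A n) F) \<and>
        (\<forall>n. A (Suc n) \<subseteq> A n) \<and> (\<Inter>n. A n) = {})"

definition lip_const :: "'a set \<Rightarrow> ('a \<Rightarrow> 'a \<Rightarrow> real) \<Rightarrow> ('a \<Rightarrow> real) \<Rightarrow> real" where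
  "lip_const S d f =
     Sup (insert 0 {\<bar>f x - f y\<bar> / d x y | x y. x \<in> S \<and> y \<in> S \<and> d x y \<noteq> 0})"

text \<open>Lip_0 of the pointed metric space (S, d, p): real Lipschitz functions on S
  vanishing at p (extended by 0 outside S so that equality is equality on S).\<close>
definition Lip0 :: "'a set \<Rightarrow> ('a \<Rightarrow> 'a \<Rightarrow> real) \<Rightarrow> 'a \<Rightarrow> ('a \<Rightarrow> real) set" where
  "Lip0 S d p = {f. f p = 0 \<and> (\<forall>x. x \<notin> S \<longrightarrow> f x = 0) \<and>
      (\<exists>L. \<forall>x\<in>S. \<forall>y\<in>S. \<bar>f x - f y\<bar> \<le> L * d x y)}"

definition lip_dist :: "'a set \<Rightarrow> ('a \<Rightarrow> 'a \<Rightarrow> real) \<Rightarrow> ('a \<Rightarrow> real) \<Rightarrow> ('a \<Rightarrow> real) \<Rightarrow> real" where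
  "lip_dist S d f g = lip_const S d (\<lambda>x. f x - g x)"

definition ult_linf :: "'a set \<Rightarrow> ('a \<Rightarrow> 'a \<Rightarrow> real) \<Rightarrow> 'a \<Rightarrow> ('i \<Rightarrow> 'a) set" where
  "ult_linf S d p = {x. (\<forall>i. x i \<in> S) \<and> (\<exists>B. \<forall>i. d (x i) p \<le> B)}"

definition ult_pdist :: "'i filter \<Rightarrow> ('a \<Rightarrow> 'a \<Rightarrow> real) \<Rightarrow> ('i \<Rightarrow> 'a) \<Rightarrow> ('i \<Rightarrow> 'a) \<Rightarrow> real" where
  "ult_pdist F d x y = Lim F (\<lambda>i. d (x i) (y i))"

definition ult_class :: "'i filter \<Rightarrow> 'a set \<Rightarrow> ('a \<Rightarrow> 'a \<Rightarrow> real) \<Rightarrow> 'a \<Rightarrow> ('i \<Rightarrow> 'a) \<Rightarrow> ('i \<Rightarrow> 'a) set" where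
  "ult_class F S d p x = {y \<in> ult_linf S d p. ult_pdist F d x y = 0}"

definition ult_space :: "'i filter \<Rightarrow> 'a set \<Rightarrow> ('a \<Rightarrow> 'a \<Rightarrow> real) \<Rightarrow> 'a \<Rightarrow> ('i \<Rightarrow> 'a) set set" where
  "ult_space F S d p = ult_class F S d p ` ult_linf S d p"

definition ult_base :: "'i filter \<Rightarrow> 'a set \<Rightarrow> ('a \<Rightarrow> 'a \<Rightarrow> real) \<Rightarrow> 'a \<Rightarrow> ('i \<Rightarrow> 'a) set" where
  "ult_base F S d p = ult_class F S d p (\<lambda>i. p)"

definition ult_dist :: "'i filter \<Rightarrow> ('a \<Rightarrow> 'a \<Rightarrow> real) \<Rightarrow> ('i \<Rightarrow> 'a) set \<Rightarrow> ('i \<Rightarrow> 'a) set \<Rightarrow> real" where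
  "ult_dist F d c1 c2 = ult_pdist F d (SOME x. x \<in> c1) (SOME y. y \<in> c2)"

abbreviation MU :: "'i filter \<Rightarrow> 'a::metric_space \<Rightarrow> ('i \<Rightarrow> 'a) set set" where
  "MU F z \<equiv> ult_space F UNIV dist z"

abbreviation dMU :: "'i filter \<Rightarrow> ('i \<Rightarrow> 'a::metric_space) set \<Rightarrow> ('i \<Rightarrow> 'a) set \<Rightarrow> real" where
  "dMU F \<equiv> ult_dist F dist"

abbreviation Lip0_MU :: "'i filter \<Rightarrow> 'a::metric_space \<Rightarrow> (('i \<Rightarrow> 'a) set \<Rightarrow> real) set" where
  "Lip0_MU F z \<equiv> Lip0 (MU F z) (dMU F) (ult_base F UNIV dist z)"

text \<open>The Banach ultrapower (Lip_0(M))_U, with its metric lim_U ||f_i - g_i||.\<close>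
abbreviation LipU :: "'i filter \<Rightarrow> 'a::metric_space \<Rightarrow> ('i \<Rightarrow> 'a \<Rightarrow> real) set set" where
  "LipU F z \<equiv> ult_space F (Lip0 UNIV dist z) (lip_dist UNIV dist) (\<lambda>_. 0)"

abbreviation dLipU :: "'i filter \<Rightarrow> ('i \<Rightarrow> 'a::metric_space \<Rightarrow> real) set \<Rightarrow> ('i \<Rightarrow> 'a \<Rightarrow> real) set \<Rightarrow> real" where
  "dLipU F \<equiv> ult_dist F (lip_dist UNIV dist)"

text \<open>The operator T((f_i)_U)((x_i)_U) = lim_U f_i(x_i), computed on representatives
  (and extended by 0 outside M_U, as for all elements of Lip0).\<close>
definition opT :: "'i filter \<Rightarrow> 'a::metric_space \<Rightarrow> ('i \<Rightarrow> 'a \<Rightarrow> real) set \<Rightarrow> ('i \<Rightarrow> 'a) set \<Rightarrow> real" where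
  "opT F z c \<xi> = (if \<xi> \<in> MU F z
      then Lim F (\<lambda>i. (SOME f. f \<in> c) i ((SOME x. x \<in> \<xi>) i)) else 0)"

definition uniformly_discrete :: "'a::metric_space set \<Rightarrow> bool" where
  "uniformly_discrete S \<longleftrightarrow> (\<exists>\<delta>>0. \<forall>x\<in>S. \<forall>y\<in>S. x \<noteq> y \<longrightarrow> \<delta> \<le> dist x y)"

end

theory Submission
  imports Defs
begin

lemma ultra_conv:
  fixes f :: "'i \<Rightarrow> real"
  assumes U: "is_ultrafilter F" and B: "eventually (\<lambda>i. \<bar>f i\<bar> \<le> B) F"
  shows "(f \<longlongrightarrow> Lim F f) F"
proof -
  have Fb: "F \<noteq> bot" using U unfolding is_ultrafilter_def by auto
  let ?G = "filtermap f F"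
  have Gb: "?G \<noteq> bot" using Fb by (simp add: filtermap_bot_iff)
  have ev: "eventually (\<lambda>y. y \<in> {-B..B}) ?G"
    unfolding eventually_filtermap by (rule eventually_mono[OF B]) auto
  obtain x where x: "inf (nhds x) ?G \<noteq> bot"
    using compact_filter[THEN iffD1, OF compact_Icc, rule_format, OF Gb ev] by blast
  have "(f \<longlongrightarrow> x) F"
  proof (rule topological_tendstoI)
    fix S :: "real set" assume S: "open S" "x \<in> S"
    show "eventually (\<lambda>i. f i \<in> S) F"
    proof (rule ccontr)
      assume "\<not> ?thesis"
      then have "eventually (\<lambda>i. \<not> f i \<in> S) F" using U unfolding is_ultrafilter_def by blast
      then have e2: "eventually (\<lambda>y. y \<notin> S) ?G" by (simp add: eventually_filtermap)
      have e1: "eventually (\<lambda>y. y \<in> S) (nhds x)" using S eventually_nhds by blast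
      have "eventually (\<lambda>y. False) (inf (nhds x) ?G)"
        unfolding eventually_inf using e1 e2 by blast
      then show False using x by (simp add: eventually_False)
    qed
  qed
  then show ?thesis using tendsto_Lim Fb by metis
qed

locale ultp =
  fixes F :: "'i filter" and S :: "'a set" and d :: "'a \<Rightarrow> 'a \<Rightarrow> real" and p :: 'a
  assumes U: "is_ultrafilter F" and pS: "p \<in> S"
  and drefl: "\<And>x. x \<in> S \<Longrightarrow> d x x = 0"
  and dsym: "\<And>x y. x \<in> S \<Longrightarrow> y \<in> S \<Longrightarrow> d x y = d y x"
  and dtri: "\<And>x y w. x \<in> S \<Longrightarrow> y \<in> S \<Longrightarrow> w \<in> S \<Longrightarrow> d x w \<le> d x y + d y w"
begin

lemma dnn: "x \<in> S \<Longrightarrow> y \<in> S \<Longrightarrow> 0 \<le> d x y"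
  using dtri[of x y x] drefl[of x] dsym[of x y] by auto

lemma Fb: "F \<noteq> bot" using U unfolding is_ultrafilter_def by auto

lemma linf_bnd:
  assumes "x \<in> ult_linf S d p" "y \<in> ult_linf S d p"
  shows "\<exists>B. \<forall>i. \<bar>d (x i) (y i)\<bar> \<le> B"
proof -
  obtain Bx By where bx: "\<forall>i. d (x i) p \<le> Bx" and yb: "\<forall>i. d (y i) p \<le> By"
    and xs: "\<forall>i. x i \<in> S" and ys: "\<forall>i. y i \<in> S"
    using assms unfolding ult_linf_def by blast
  have "\<bar>d (x i) (y i)\<bar> \<le> Bx + By" for i
  proof -
    have "d (x i) (y i) \<le> d (x i) p + d p (y i)" using dtri xs ys pS by blast
    also have "\<dots> = d (x i) p + d (y i) p" using dsym xs ys pS by metis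
    finally show ?thesis using dnn xs ys bx yb by (smt (verit))
  qed
  then show ?thesis by blast
qed

lemma pd_tends:
  assumes "x \<in> ult_linf S d p" "y \<in> ult_linf S d p"
  shows "((\<lambda>i. d (x i) (y i)) \<longlongrightarrow> ult_pdist F d x y) F"
proof -
  obtain B where "\<forall>i. \<bar>d (x i) (y i)\<bar> \<le> B" using linf_bnd[OF assms] by blast
  then show ?thesis unfolding ult_pdist_def by (intro ultra_conv[OF U]) (auto intro: always_eventually)
qed

lemma linfS: "x \<in> ult_linf S d p \<Longrightarrow> x i \<in> S" unfolding ult_linf_def by auto

lemma pd_nn: assumes a: "x \<in> ult_linf S d p" and b: "y \<in> ult_linf S d p" shows "0 \<le> ult_pdist F d x y"
  by (rule tendsto_lowerbound[OF pd_tends[OF a b]]) (auto intro!: always_eventually dnn linfS[OF a] linfS[OF b] simp: Fb)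

lemma pd_sym: "x \<in> ult_linf S d p \<Longrightarrow> y \<in> ult_linf S d p \<Longrightarrow> ult_pdist F d x y = ult_pdist F d y x"
proof -
  assume a: "x \<in> ult_linf S d p" "y \<in> ult_linf S d p"
  have "(\<lambda>i. d (x i) (y i)) = (\<lambda>i. d (y i) (x i))"
    by (rule ext, rule dsym; rule linfS; fact)
  then show ?thesis unfolding ult_pdist_def by simp
qed

lemma pd_tri: assumes a: "x \<in> ult_linf S d p" and b: "y \<in> ult_linf S d p" and c: "w \<in> ult_linf S d p" shows
   "ult_pdist F d x w \<le> ult_pdist F d x y + ult_pdist F d y w"
  by (rule tendsto_le[OF _ tendsto_add[OF pd_tends[OF a b] pd_tends[OF b c]] pd_tends[OF a c]])
     (auto intro!: always_eventually dtri linfS[OF a] linfS[OF b] linfS[OF c] simp: Fb)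

lemma pd_refl: "x \<in> ult_linf S d p \<Longrightarrow> ult_pdist F d x x = 0"
proof -
  assume a: "x \<in> ult_linf S d p"
  have "(\<lambda>i. d (x i) (x i)) = (\<lambda>i. 0)"
    by (rule ext, rule drefl, rule linfS, fact)
  then show ?thesis unfolding ult_pdist_def using Fb by (simp add: tendsto_Lim)
qed

lemma cls_mem: "x \<in> ult_linf S d p \<Longrightarrow> x \<in> ult_class F S d p x"
  unfolding ult_class_def using pd_refl by auto

lemma cls_eq:
  assumes "x \<in> ult_linf S d p" "y \<in> ult_linf S d p" "ult_pdist F d x y = 0"
  shows "ult_class F S d p x = ult_class F S d p y"
proof -
  have "ult_pdist F d x w = 0 \<longleftrightarrow> ult_pdist F d y w = 0" if "w \<in> ult_linf S d p" for w
    using pd_tri[OF assms(1,2) that] pd_tri[OF assms(2,1) that] pd_nn[OF assms(1) that] pd_nn[OF assms(2) that]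
      pd_sym[OF assms(1,2)] assms(3) by linarith
  then show ?thesis unfolding ult_class_def by auto
qed

lemma cls_eq_iff:
  assumes "x \<in> ult_linf S d p" "y \<in> ult_linf S d p"
  shows "ult_class F S d p x = ult_class F S d p y \<longleftrightarrow> ult_pdist F d x y = 0"
proof
  assume "ult_class F S d p x = ult_class F S d p y"
  then have "y \<in> ult_class F S d p x" using cls_mem[OF assms(2)] by simp
  then show "ult_pdist F d x y = 0" unfolding ult_class_def by simp
qed (rule cls_eq[OF assms])

lemma rep:
  assumes "c \<in> ult_space F S d p"
  shows "(SOME y. y \<in> c) \<in> ult_linf S d p \<and> ult_class F S d p (SOME y. y \<in> c) = c"
proof -
  obtain x where x: "x \<in> ult_linf S d p" "c = ult_class F S d p x" using assms unfolding ult_space_def by blast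
  then have "x \<in> c" using cls_mem by auto
  then have s: "(SOME y. y \<in> c) \<in> c" by (rule someI[of "\<lambda>y. y \<in> c"])
  then have "(SOME y. y \<in> c) \<in> ult_class F S d p x" using x(2) by blast
  then have a: "(SOME y. y \<in> c) \<in> ult_linf S d p" "ult_pdist F d x (SOME y. y \<in> c) = 0"
    unfolding ult_class_def by auto
  have "ult_class F S d p (SOME y. y \<in> c) = c" using cls_eq[OF x(1) a] x(2) by (rule trans[OF sym sym])
  then show ?thesis using a(1) by blast
qed

lemma udist_cls:
  assumes x: "x \<in> ult_linf S d p" and y: "y \<in> ult_linf S d p"
  shows "ult_dist F d (ult_class F S d p x) (ult_class F S d p y) = ult_pdist F d x y"
proof -
  define x' where "x' = (SOME y. y \<in> ult_class F S d p x)"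
  define y' where "y' = (SOME w. w \<in> ult_class F S d p y)"
  have cx: "ult_class F S d p x \<in> ult_space F S d p" using x unfolding ult_space_def by auto
  have cy: "ult_class F S d p y \<in> ult_space F S d p" using y unfolding ult_space_def by auto
  have x': "x' \<in> ult_linf S d p" "ult_pdist F d x x' = 0"
  proof -
    have r: "x' \<in> ult_linf S d p" "ult_class F S d p x' = ult_class F S d p x" using rep[OF cx] unfolding x'_def by auto
    show "x' \<in> ult_linf S d p" by (fact r(1))
    show "ult_pdist F d x x' = 0" using cls_eq_iff[OF x r(1)] r(2) by simp
  qed
  have y': "y' \<in> ult_linf S d p" "ult_pdist F d y y' = 0"
  proof -
    have r: "y' \<in> ult_linf S d p" "ult_class F S d p y' = ult_class F S d p y" using rep[OF cy] unfolding y'_def by auto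
    show "y' \<in> ult_linf S d p" by (fact r(1))
    show "ult_pdist F d y y' = 0" using cls_eq_iff[OF y r(1)] r(2) by simp
  qed
  have "ult_pdist F d x' y' \<le> ult_pdist F d x' x + ult_pdist F d x y + ult_pdist F d y y'"
    using pd_tri[OF x' (1) x y'(1)] pd_tri[OF x y y'(1)] by linarith
  moreover have "ult_pdist F d x y \<le> ult_pdist F d x x' + ult_pdist F d x' y' + ult_pdist F d y' y"
    using pd_tri[OF x x'(1) y] pd_tri[OF x'(1) y'(1) y] by linarith
  ultimately have "ult_pdist F d x' y' = ult_pdist F d x y"
    using x' y' pd_sym[OF x x'(1)] pd_sym[OF y y'(1)] by linarith
  then show ?thesis unfolding ult_dist_def x'_def y'_def .
qed

end


lemma lip_bdd:
  fixes d :: "'a \<Rightarrow> 'a \<Rightarrow> real" and f :: "'a \<Rightarrow> real"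
  assumes "\<forall>x\<in>S. \<forall>y\<in>S. \<bar>f x - f y\<bar> \<le> K * d x y" "\<forall>x\<in>S. \<forall>y\<in>S. 0 \<le> d x y"
  shows "bdd_above (insert 0 {\<bar>f x - f y\<bar> / d x y | x y. x \<in> S \<and> y \<in> S \<and> d x y \<noteq> 0})"
proof (rule bdd_aboveI[of _ "max K 0"])
  fix r assume r: "r \<in> insert 0 {\<bar>f x - f y\<bar> / d x y | x y. x \<in> S \<and> y \<in> S \<and> d x y \<noteq> 0}"
  show "r \<le> max K 0"
  proof (cases "r = 0")
    case False
    then obtain x y where xy: "x \<in> S" "y \<in> S" "d x y \<noteq> 0" "r = \<bar>f x - f y\<bar> / d x y" using r by auto
    have "0 \<le> d x y" using assms(2) xy(1,2) by blast
    then have dp: "0 < d x y" using xy(3) by linarith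
    have "\<bar>f x - f y\<bar> \<le> K * d x y" using assms(1) xy(1,2) by blast
    then have "\<bar>f x - f y\<bar> / d x y \<le> K" using dp by (simp add: divide_le_eq)
    then show ?thesis using xy(4) by linarith
  qed simp
qed

lemma lip_nn:
  fixes d :: "'a \<Rightarrow> 'a \<Rightarrow> real" and f :: "'a \<Rightarrow> real"
  assumes "\<forall>x\<in>S. \<forall>y\<in>S. \<bar>f x - f y\<bar> \<le> K * d x y" "\<forall>x\<in>S. \<forall>y\<in>S. 0 \<le> d x y"
  shows "0 \<le> lip_const S d f"
  unfolding lip_const_def by (rule cSup_upper[OF _ lip_bdd[OF assms]]) simp

lemma lip_ratio:
  fixes d :: "'a \<Rightarrow> 'a \<Rightarrow> real" and f :: "'a \<Rightarrow> real"
  assumes "\<forall>x\<in>S. \<forall>y\<in>S. \<bar>f x - f y\<bar> \<le> K * d x y" "\<forall>x\<in>S. \<forall>y\<in>S. 0 \<le> d x y"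
    and "x \<in> S" "y \<in> S" "d x y \<noteq> 0"
  shows "\<bar>f x - f y\<bar> / d x y \<le> lip_const S d f"
  unfolding lip_const_def by (rule cSup_upper[OF _ lip_bdd[OF assms(1,2)]]) (use assms(3-5) in auto)

lemma lip_upper:
  fixes d :: "'a \<Rightarrow> 'a \<Rightarrow> real" and f :: "'a \<Rightarrow> real"
  assumes "\<forall>x\<in>S. \<forall>y\<in>S. \<bar>f x - f y\<bar> \<le> K * d x y" "\<forall>x\<in>S. \<forall>y\<in>S. 0 \<le> d x y"
    and "x \<in> S" "y \<in> S"
  shows "\<bar>f x - f y\<bar> \<le> lip_const S d f * d x y"
proof (cases "d x y = 0")
  case True 
  have "\<bar>f x - f y\<bar> \<le> K * d x y" using assms(1,3,4) by blast
  then show ?thesis using True by simp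
next
  case False
  have "0 \<le> d x y" using assms(2,3,4) by blast
  then have "0 < d x y" using False by linarith
  then show ?thesis using lip_ratio[OF assms False] by (simp add: divide_le_eq)
qed

lemma lip_least:
  fixes d :: "'a \<Rightarrow> 'a \<Rightarrow> real" and f :: "'a \<Rightarrow> real"
  assumes "0 \<le> K" "\<forall>x\<in>S. \<forall>y\<in>S. \<bar>f x - f y\<bar> \<le> K * d x y" "\<forall>x\<in>S. \<forall>y\<in>S. 0 \<le> d x y"
  shows "lip_const S d f \<le> K"
  unfolding lip_const_def
proof (rule cSup_least)
  fix r assume r: "r \<in> insert 0 {\<bar>f x - f y\<bar> / d x y | x y. x \<in> S \<and> y \<in> S \<and> d x y \<noteq> 0}"
  show "r \<le> K"
  proof (cases "r = 0")
    case False
    then obtain x y where xy: "x \<in> S" "y \<in> S" "d x y \<noteq> 0" "r = \<bar>f x - f y\<bar> / d x y" using r by auto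
    have "0 \<le> d x y" using assms(3) xy(1,2) by blast
    then have dp: "0 < d x y" using xy(3) by linarith
    have "\<bar>f x - f y\<bar> \<le> K * d x y" using assms(2) xy(1,2) by blast
    then have "\<bar>f x - f y\<bar> / d x y \<le> K" using dp by (simp add: divide_le_eq)
    then show ?thesis using xy(4) by linarith
  qed (use assms in simp)
qed simp

lemma lip_zero: "lip_const S d (\<lambda>x. 0) = 0" for d :: "'a \<Rightarrow> 'a \<Rightarrow> real"
proof -
  have e: "insert (0::real) {u. u = 0 \<and> P} = {0}" for P by auto
  show ?thesis unfolding lip_const_def by (simp add: e)
qed

lemma Lip0_L: "f \<in> Lip0 UNIV dist z \<Longrightarrow> \<exists>L. \<forall>x\<in>UNIV. \<forall>y\<in>UNIV. \<bar>f x - f y\<bar> \<le> L * dist x y"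
  unfolding Lip0_def by auto

lemma Lip0_diff:
  assumes "f \<in> Lip0 UNIV dist z" "g \<in> Lip0 UNIV dist z"
  shows "\<exists>L. \<forall>x\<in>UNIV. \<forall>y\<in>UNIV. \<bar>(f x - g x) - (f y - g y)\<bar> \<le> L * dist x y"
proof -
  obtain L1 L2 where l1: "\<forall>x\<in>UNIV. \<forall>y\<in>UNIV. \<bar>f x - f y\<bar> \<le> L1 * dist x y"
    and l2: "\<forall>x\<in>UNIV. \<forall>y\<in>UNIV. \<bar>g x - g y\<bar> \<le> L2 * dist x y"
    using Lip0_L[OF assms(1)] Lip0_L[OF assms(2)] by blast
  have "\<bar>(f x - g x) - (f y - g y)\<bar> \<le> (L1 + L2) * dist x y" for x y
    using l1 l2 [rule_format, of x y] by (simp add: algebra_simps) (smt (verit) UNIV_I)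
  then show ?thesis by blast
qed

lemma dist_nn: "\<forall>x\<in>S. \<forall>y\<in>S. 0 \<le> dist x y" by simp

lemma lipd_bound:
  assumes "f \<in> Lip0 UNIV dist z" "g \<in> Lip0 UNIV dist z"
  shows "\<bar>(f x - g x) - (f y - g y)\<bar> \<le> lip_dist UNIV dist f g * dist x y"
proof -
  obtain L where "\<forall>x\<in>UNIV. \<forall>y\<in>UNIV. \<bar>(f x - g x) - (f y - g y)\<bar> \<le> L * dist x y"
    using Lip0_diff[OF assms] by blast
  from lip_upper[of UNIV "\<lambda>x. f x - g x", OF this dist_nn] show ?thesis unfolding lip_dist_def by simp
qed

lemma lipd_nn:
  assumes "f \<in> Lip0 UNIV dist z" "g \<in> Lip0 UNIV dist z"
  shows "0 \<le> lip_dist UNIV dist f g"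
proof -
  obtain L where "\<forall>x\<in>UNIV. \<forall>y\<in>UNIV. \<bar>(f x - g x) - (f y - g y)\<bar> \<le> L * dist x y"
    using Lip0_diff[OF assms] by blast
  from lip_nn[of UNIV "\<lambda>x. f x - g x", OF this dist_nn] show ?thesis unfolding lip_dist_def by simp
qed

lemma lipd_ratio:
  assumes "f \<in> Lip0 UNIV dist z" "g \<in> Lip0 UNIV dist z" "x \<noteq> y"
  shows "\<bar>(f x - g x) - (f y - g y)\<bar> / dist x y \<le> lip_dist UNIV dist f g"
proof -
  obtain L where "\<forall>x\<in>UNIV. \<forall>y\<in>UNIV. \<bar>(f x - g x) - (f y - g y)\<bar> \<le> L * dist x y"
    using Lip0_diff[OF assms(1,2)] by blast
  from lip_ratio[of UNIV "\<lambda>x. f x - g x", OF this dist_nn] show ?thesis unfolding lip_dist_def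
    using assms(3) by simp
qed

lemma lipd_least:
  assumes "0 \<le> K" "\<forall>x y. \<bar>(f x - g x) - (f y - g y)\<bar> \<le> K * dist x y"
  shows "lip_dist UNIV dist f g \<le> K"
  unfolding lip_dist_def by (rule lip_least) (use assms in auto)

lemma L_ultp: "is_ultrafilter F \<Longrightarrow> ultp F (Lip0 UNIV dist z) (lip_dist UNIV dist) (\<lambda>_. 0)"
proof (unfold_locales)
  show "(\<lambda>_. 0) \<in> Lip0 UNIV dist z" unfolding Lip0_def by (auto intro: exI[of _ 0])
next
  fix f assume "f \<in> Lip0 UNIV dist z"
  show "lip_dist UNIV dist f f = 0" unfolding lip_dist_def using lip_zero by simp
next
  fix f g assume a: "f \<in> Lip0 UNIV dist z" "g \<in> Lip0 UNIV dist z"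
  have 1: "lip_dist UNIV dist f g \<le> lip_dist UNIV dist g f"
    if "f \<in> Lip0 UNIV dist z" "g \<in> Lip0 UNIV dist z" for f g
    apply (rule lipd_least[OF lipd_nn[OF that(2,1)]])
    using lipd_bound[OF that(2,1)] by (simp add: abs_minus_commute algebra_simps)
  show "lip_dist UNIV dist f g = lip_dist UNIV dist g f" using 1[OF a] 1[OF a(2,1)] by simp
next
  fix f g w assume a: "f \<in> Lip0 UNIV dist z" "g \<in> Lip0 UNIV dist z" "w \<in> Lip0 UNIV dist z"
  show "lip_dist UNIV dist f w \<le> lip_dist UNIV dist f g + lip_dist UNIV dist g w"
  proof (rule lipd_least)
    show "0 \<le> lip_dist UNIV dist f g + lip_dist UNIV dist g w" using lipd_nn a by (metis add_nonneg_nonneg)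
    show "\<forall>x y. \<bar>f x - w x - (f y - w y)\<bar> \<le> (lip_dist UNIV dist f g + lip_dist UNIV dist g w) * dist x y"
    proof (intro allI)
      fix x y
      have "\<bar>f x - w x - (f y - w y)\<bar> \<le> \<bar>f x - g x - (f y - g y)\<bar> + \<bar>g x - w x - (g y - w y)\<bar>" by linarith
      then show "\<bar>f x - w x - (f y - w y)\<bar> \<le> (lip_dist UNIV dist f g + lip_dist UNIV dist g w) * dist x y"
        using lipd_bound[OF a(1,2), of x y] lipd_bound[OF a(2,3), of x y] by (simp add: algebra_simps)
    qed
  qed
qed

lemma M_ultp: "is_ultrafilter F \<Longrightarrow> ultp F UNIV dist z"
  by unfold_locales (auto simp: dist_commute dist_triangle)


lemma zero_Lip0: "(\<lambda>_. 0) \<in> Lip0 UNIV dist z"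
  unfolding Lip0_def by (auto intro: exI[of _ 0])

lemma Lip0_z: "f \<in> Lip0 UNIV dist z \<Longrightarrow> f z = 0" unfolding Lip0_def by auto

lemma val_lip:
  assumes "f \<in> Lip0 UNIV dist z"
  shows "\<bar>f x - f y\<bar> \<le> lip_dist UNIV dist f (\<lambda>_. 0) * dist x y"
  using lipd_bound[OF assms zero_Lip0, of x y] by simp

lemma val_bnd:
  assumes "f \<in> Lip0 UNIV dist z"
  shows "\<bar>f x\<bar> \<le> lip_dist UNIV dist f (\<lambda>_. 0) * dist x z"
  using val_lip[OF assms, of x z] Lip0_z[OF assms] by simp

lemma val_ratio:
  assumes "f \<in> Lip0 UNIV dist z" "u \<noteq> v"
  shows "\<bar>f u - f v\<bar> / dist u v \<le> lip_dist UNIV dist f (\<lambda>_. 0)"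
  using lipd_ratio[OF assms(1) zero_Lip0 assms(2)] by simp

lemma lip1_Lip0:
  assumes "f z = 0" "\<forall>x y. \<bar>f x - f y\<bar> \<le> dist x y"
  shows "f \<in> Lip0 UNIV dist z \<and> lip_dist UNIV dist f (\<lambda>_. 0) \<le> 1"
proof
  show "f \<in> Lip0 UNIV dist z" unfolding Lip0_def using assms by (auto intro!: exI[of _ 1])
  show "lip_dist UNIV dist f (\<lambda>_. 0) \<le> 1" by (rule lipd_least) (use assms(2) in auto)
qed

locale setting =
  fixes F :: "'i filter" and z :: "'a::metric_space"
  assumes U: "is_ultrafilter F"
begin

sublocale M: ultp F "UNIV::'a set" dist z by (rule M_ultp[OF U])
sublocale L: ultp F "Lip0 UNIV dist z" "lip_dist UNIV dist" "\<lambda>_::'a. 0::real" by (rule L_ultp[OF U])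

lemma LL_bnd: "f \<in> ult_linf (Lip0 UNIV dist z) (lip_dist UNIV dist) (\<lambda>_. 0) \<Longrightarrow>
  \<exists>B. \<forall>i. lip_dist UNIV dist (f i) (\<lambda>_. 0) \<le> B"
  unfolding ult_linf_def by auto

lemma Mbnd_lemma: "x \<in> ult_linf UNIV dist z \<Longrightarrow> \<exists>B. \<forall>i. dist (x i) z \<le> B"
  unfolding ult_linf_def by auto

lemma eval_bnd:
  assumes f: "f \<in> ult_linf (Lip0 UNIV dist z) (lip_dist UNIV dist) (\<lambda>_. 0)"
    and x: "x \<in> ult_linf UNIV dist z"
  shows "\<exists>B. \<forall>i. \<bar>f i (x i)\<bar> \<le> B"
proof -
  obtain Bf where bf: "\<forall>i. lip_dist UNIV dist (f i) (\<lambda>_. 0) \<le> Bf" using LL_bnd[OF f] by blast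
  obtain Bx where bx: "\<forall>i. dist (x i) z \<le> Bx" using Mbnd_lemma[OF x] by blast
  have "\<bar>f i (x i)\<bar> \<le> Bf * Bx" for i
  proof -
    have fi: "f i \<in> Lip0 UNIV dist z" by (rule L.linfS[OF f])
    have b0: "0 \<le> Bf" using lipd_nn[OF fi zero_Lip0] bf[rule_format, of i] by linarith
    have "\<bar>f i (x i)\<bar> \<le> lip_dist UNIV dist (f i) (\<lambda>_. 0) * dist (x i) z" by (rule val_bnd[OF fi])
    also have "\<dots> \<le> Bf * Bx"
      using mult_mono[OF bf[rule_format, of i] bx[rule_format, of i] b0 zero_le_dist] .
    finally show ?thesis .
  qed
  then show ?thesis by blast
qed

lemma eval_tends:
  assumes f: "f \<in> ult_linf (Lip0 UNIV dist z) (lip_dist UNIV dist) (\<lambda>_. 0)"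
    and x: "x \<in> ult_linf UNIV dist z"
  shows "((\<lambda>i. f i (x i)) \<longlongrightarrow> Lim F (\<lambda>i. f i (x i))) F"
proof -
  obtain B where "\<forall>i. \<bar>f i (x i)\<bar> \<le> B" using eval_bnd[OF f x] by blast
  then show ?thesis by (intro ultra_conv[OF U]) (auto intro: always_eventually)
qed

lemma eval_cong:
  assumes f: "f \<in> ult_linf (Lip0 UNIV dist z) (lip_dist UNIV dist) (\<lambda>_. 0)"
    and f': "f' \<in> ult_linf (Lip0 UNIV dist z) (lip_dist UNIV dist) (\<lambda>_. 0)"
    and x: "x \<in> ult_linf UNIV dist z" and x': "x' \<in> ult_linf UNIV dist z"
    and pf: "ult_pdist F (lip_dist UNIV dist) f f' = 0" and px: "ult_pdist F dist x x' = 0"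
  shows "((\<lambda>i. f' i (x' i) - f i (x i)) \<longlongrightarrow> 0) F"
proof -
  obtain B' where b': "\<forall>i. lip_dist UNIV dist (f' i) (\<lambda>_. 0) \<le> B'" using LL_bnd[OF f'] by blast
  obtain Bx where bx: "\<forall>i. dist (x i) z \<le> Bx" using Mbnd_lemma[OF x] by blast
  have bound: "norm (f' i (x' i) - f i (x i)) \<le> B' * dist (x' i) (x i) + lip_dist UNIV dist (f' i) (f i) * Bx" for i
  proof -
    have fi: "f i \<in> Lip0 UNIV dist z" by (rule L.linfS[OF f])
    have fi': "f' i \<in> Lip0 UNIV dist z" by (rule L.linfS[OF f'])
    have 1: "\<bar>f' i (x' i) - f' i (x i)\<bar> \<le> B' * dist (x' i) (x i)"
      using val_lip[OF fi', of "x' i" "x i"] mult_right_mono[OF b'[rule_format, of i] zero_le_dist[of "x' i" "x i"]]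
      by linarith
    have 2: "\<bar>(f' i (x i) - f i (x i)) - (f' i z - f i z)\<bar> \<le> lip_dist UNIV dist (f' i) (f i) * Bx"
      using lipd_bound[OF fi' fi, of "x i" z] mult_left_mono[OF bx[rule_format, of i] lipd_nn[OF fi' fi]]
      by linarith
    have "f' i z = 0" "f i z = 0" using Lip0_z fi fi' by auto
    then show ?thesis using 1 2 by (simp add: real_norm_def)
  qed
  have "((\<lambda>i. B' * dist (x' i) (x i) + lip_dist UNIV dist (f' i) (f i) * Bx) \<longlongrightarrow> B' * 0 + 0 * Bx) F"
  proof (intro tendsto_intros)
    show "((\<lambda>i. dist (x' i) (x i)) \<longlongrightarrow> 0) F"
      using M.pd_tends[OF x' x] M.pd_sym[OF x x'] px by simp
    show "((\<lambda>i. lip_dist UNIV dist (f' i) (f i)) \<longlongrightarrow> 0) F"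
      using L.pd_tends[OF f' f] L.pd_sym[OF f f'] pf by simp
  qed
  then have "((\<lambda>i. B' * dist (x' i) (x i) + lip_dist UNIV dist (f' i) (f i) * Bx) \<longlongrightarrow> 0) F" by simp
  then show ?thesis by (rule Lim_null_comparison[OF always_eventually, rotated]) (use bound in blast)
qed

lemma opT_cls:
  assumes f: "f \<in> ult_linf (Lip0 UNIV dist z) (lip_dist UNIV dist) (\<lambda>_. 0)"
    and x: "x \<in> ult_linf UNIV dist z"
  shows "opT F z (ult_class F (Lip0 UNIV dist z) (lip_dist UNIV dist) (\<lambda>_. 0) f) (ult_class F UNIV dist z x)
     = Lim F (\<lambda>i. f i (x i))"
proof -
  let ?cf = "ult_class F (Lip0 UNIV dist z) (lip_dist UNIV dist) (\<lambda>_. 0) f"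
  let ?cx = "ult_class F UNIV dist z x"
  have cM: "?cx \<in> MU F z" using x unfolding ult_space_def by auto
  have cL: "?cf \<in> LipU F z" using f unfolding ult_space_def by auto
  define f' where "f' = (SOME g. g \<in> ?cf)"
  define x' where "x' = (SOME y. y \<in> ?cx)"
  have f': "f' \<in> ult_linf (Lip0 UNIV dist z) (lip_dist UNIV dist) (\<lambda>_. 0)"
    "ult_class F (Lip0 UNIV dist z) (lip_dist UNIV dist) (\<lambda>_. 0) f' = ?cf"
    using L.rep[OF cL] unfolding f'_def by auto
  have x': "x' \<in> ult_linf UNIV dist z" "ult_class F UNIV dist z x' = ?cx"
    using M.rep[OF cM] unfolding x'_def by auto
  have pf: "ult_pdist F (lip_dist UNIV dist) f f' = 0" using L.cls_eq_iff[OF f f'(1)] f'(2) by simp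
  have px: "ult_pdist F dist x x' = 0" using M.cls_eq_iff[OF x x'(1)] x'(2) by simp
  have "((\<lambda>i. f i (x i) + (f' i (x' i) - f i (x i))) \<longlongrightarrow> Lim F (\<lambda>i. f i (x i)) + 0) F"
    by (rule tendsto_add[OF eval_tends[OF f x] eval_cong[OF f f'(1) x x'(1) pf px]])
  then have "((\<lambda>i. f' i (x' i)) \<longlongrightarrow> Lim F (\<lambda>i. f i (x i))) F" by simp
  then have "Lim F (\<lambda>i. f' i (x' i)) = Lim F (\<lambda>i. f i (x i))" using M.Fb by (simp add: tendsto_Lim)
  then show ?thesis unfolding opT_def f'_def x'_def using cM by simp
qed

lemma partA:
  assumes iso: "\<forall>c1\<in>LipU F z. \<forall>c2\<in>LipU F z.
                   lip_dist (MU F z) (dMU F) (opT F z c1) (opT F z c2) = dLipU F c1 c2"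
  shows "inj_on (opT F z) (LipU F z)"
proof (rule inj_onI)
  fix c1 c2 assume c1: "c1 \<in> LipU F z" and c2: "c2 \<in> LipU F z" and eq: "opT F z c1 = opT F z c2"
  have "lip_dist (MU F z) (dMU F) (opT F z c1) (opT F z c2) = 0"
    unfolding lip_dist_def eq using lip_zero by simp
  then have d0: "dLipU F c1 c2 = 0" using iso c1 c2 by simp
  obtain f1 where f1: "f1 \<in> ult_linf (Lip0 UNIV dist z) (lip_dist UNIV dist) (\<lambda>_. 0)"
     "c1 = ult_class F (Lip0 UNIV dist z) (lip_dist UNIV dist) (\<lambda>_. 0) f1"
    using c1 unfolding ult_space_def by auto
  obtain f2 where f2: "f2 \<in> ult_linf (Lip0 UNIV dist z) (lip_dist UNIV dist) (\<lambda>_. 0)"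
     "c2 = ult_class F (Lip0 UNIV dist z) (lip_dist UNIV dist) (\<lambda>_. 0) f2"
    using c2 unfolding ult_space_def by auto
  have "ult_pdist F (lip_dist UNIV dist) f1 f2 = 0" using d0 L.udist_cls[OF f1(1) f2(1)] f1(2) f2(2) by simp
  then show "c1 = c2" using L.cls_eq[OF f1(1) f2(1)] f1(2) f2(2) by simp
qed


lemma r_exists:
  assumes "countably_incomplete F"
  shows "\<exists>r::'i \<Rightarrow> nat. \<forall>N. eventually (\<lambda>i. N \<le> r i) F"
proof -
  obtain A :: "nat \<Rightarrow> 'i set" where ev: "\<forall>n. eventually (\<lambda>i. i \<in> A n) F"
    and dec: "\<forall>n. A (Suc n) \<subseteq> A n" and emp: "(\<Inter>n. A n) = {}"
    using assms unfolding countably_incomplete_def by blast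
  define r where "r i = (LEAST n. i \<notin> A n)" for i
  have "eventually (\<lambda>i. N \<le> r i) F" for N
  proof (rule eventually_mono[OF ev[rule_format, of N]])
    fix i assume iN: "i \<in> A N"
    have "\<exists>n. i \<notin> A n" using emp by blast
    then have nr: "i \<notin> A (r i)" unfolding r_def by (rule LeastI_ex)
    show "N \<le> r i"
    proof (rule ccontr)
      assume "\<not> N \<le> r i"
      then have "r i \<le> N" by simp
      then have "A N \<subseteq> A (r i)" using lift_Suc_antimono_le[of A "r i" N] dec by blast
      then show False using iN nr by blast
    qed
  qed
  then show ?thesis by blast
qed

lemma maxlem: "0 \<le> a \<Longrightarrow> 0 \<le> b \<Longrightarrow> 0 < e \<Longrightarrow> \<bar>max 0 (e - a) - max 0 (e - b)\<bar> \<le> e" for a b e :: real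
  by (simp add: max_def abs_if)

lemma h_exists:
  assumes ci: "countably_incomplete F"
    and nd: "\<not> (uniformly_discrete (UNIV::'a set) \<and> bounded (UNIV::'a set))"
  shows "\<exists>h::'i \<Rightarrow> 'a \<Rightarrow> real. (\<forall>i. h i \<in> Lip0 UNIV dist z \<and> lip_dist UNIV dist (h i) (\<lambda>_. 0) \<le> 1
     \<and> 1/2 \<le> lip_dist UNIV dist (h i) (\<lambda>_. 0)) \<and>
     (\<forall>x\<in>ult_linf UNIV dist z. ((\<lambda>i. h i (x i)) \<longlongrightarrow> 0) F)"
proof -
  obtain r :: "'i \<Rightarrow> nat" where r: "\<forall>N. eventually (\<lambda>i. N \<le> r i) F" using r_exists[OF ci] by blast
  show ?thesis
  proof (cases "bounded (UNIV::'a set)")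
    case False
    have far: "\<exists>u. R < dist u z" for R
    proof (rule ccontr)
      assume "\<not> ?thesis"
      then have "\<forall>u\<in>UNIV. dist z u \<le> R" by (auto simp: dist_commute not_less)
      then have "bounded (UNIV::'a set)" unfolding bounded_def by blast
      then show False using False by simp
    qed
    define h where "h i x = max 0 (dist x z - real (r i))" for i x
    have hl: "h i \<in> Lip0 UNIV dist z \<and> lip_dist UNIV dist (h i) (\<lambda>_. 0) \<le> 1" for i
    proof (rule lip1_Lip0)
      show "h i z = 0" unfolding h_def by simp
      show "\<forall>x y. \<bar>h i x - h i y\<bar> \<le> dist x y"
      proof (intro allI)
        fix x y
        have "\<bar>dist x z - dist y z\<bar> \<le> dist x y" using abs_dist_diff_le[of x z y] by (simp add: dist_commute)
        then show "\<bar>h i x - h i y\<bar> \<le> dist x y" unfolding h_def by linarith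
      qed
    qed
    have hg: "1/2 \<le> lip_dist UNIV dist (h i) (\<lambda>_. 0)" for i
    proof -
      obtain u where u: "2 * real (r i) + 1 < dist u z" using far by blast
      then have uz: "u \<noteq> z" by auto
      have "\<bar>h i u - h i z\<bar> / dist u z \<le> lip_dist UNIV dist (h i) (\<lambda>_. 0)"
        using val_ratio[OF hl[THEN conjunct1] uz] .
      moreover have "\<bar>h i u - h i z\<bar> = dist u z - real (r i)" unfolding h_def using u by simp
      moreover have "1/2 \<le> (dist u z - real (r i)) / dist u z"
      proof -
        have dp: "0 < dist u z" using u by linarith
        show ?thesis using u dp by (simp add: le_divide_eq)
      qed
      ultimately show ?thesis by (metis order_trans)
    qed
    have ht: "((\<lambda>i. h i (x i)) \<longlongrightarrow> 0) F" if x: "x \<in> ult_linf UNIV dist z" for x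
    proof -
      obtain B where B: "\<forall>i. dist (x i) z \<le> B" using Mbnd_lemma[OF x] by blast
      have "eventually (\<lambda>i. nat \<lceil>B\<rceil> \<le> r i) F" using r by blast
      then have "eventually (\<lambda>i. h i (x i) = 0) F"
      proof (rule eventually_mono)
        fix i assume "nat \<lceil>B\<rceil> \<le> r i"
        then have "B \<le> real (r i)" by linarith
        then show "h i (x i) = 0" unfolding h_def using B[rule_format, of i] by simp
      qed
      then show ?thesis by (rule tendsto_eventually)
    qed
    have "\<forall>i. h i \<in> Lip0 UNIV dist z \<and> lip_dist UNIV dist (h i) (\<lambda>_. 0) \<le> 1
     \<and> 1/2 \<le> lip_dist UNIV dist (h i) (\<lambda>_. 0)" using hl hg by blast
    moreover have "\<forall>x\<in>ult_linf UNIV dist z. ((\<lambda>i. h i (x i)) \<longlongrightarrow> 0) F" using ht by blast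
    ultimately show ?thesis by (intro exI[of _ h] conjI)
  next
    case True
    then have "\<not> uniformly_discrete (UNIV::'a set)" using nd by blast
    have close: "\<exists>u v::'a. u \<noteq> v \<and> dist u v < e" if "e > 0" for e :: real
    proof (rule ccontr)
      assume "\<not> (\<exists>u v::'a. u \<noteq> v \<and> dist u v < e)"
      then have "\<forall>x\<in>(UNIV::'a set). \<forall>y\<in>UNIV. x \<noteq> y \<longrightarrow> e \<le> dist x y" by (auto simp: not_less)
      then have "uniformly_discrete (UNIV::'a set)" unfolding uniformly_discrete_def using that by blast
      then show False using \<open>\<not> uniformly_discrete (UNIV::'a set)\<close> by simp
    qed
    define e where "e i = 1 / (real (r i) + 1)" for i
    have epos: "e i > 0" for i unfolding e_def by simp
    have "\<forall>i. \<exists>p::'a\<times>'a. fst p \<noteq> snd p \<and> dist (fst p) (snd p) < e i"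
    proof
      fix i
      obtain u v :: 'a where "u \<noteq> v \<and> dist u v < e i" using close[OF epos[of i]] by blast
      then show "\<exists>p::'a\<times>'a. fst p \<noteq> snd p \<and> dist (fst p) (snd p) < e i" by (intro exI[of _ "(u, v)"]) simp
    qed
    from choice[OF this] obtain uv :: "'i \<Rightarrow> 'a \<times> 'a"
      where uv0: "\<forall>i. fst (uv i) \<noteq> snd (uv i) \<and> dist (fst (uv i)) (snd (uv i)) < e i" by blast
    have uv: "fst (uv i) \<noteq> snd (uv i) \<and> dist (fst (uv i)) (snd (uv i)) < e i" for i using uv0 by blast
    define h where "h i x = max 0 (e i - dist x (fst (uv i))) - max 0 (e i - dist z (fst (uv i)))" for i x
    have hl: "h i \<in> Lip0 UNIV dist z \<and> lip_dist UNIV dist (h i) (\<lambda>_. 0) \<le> 1" for i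
    proof (rule lip1_Lip0)
      show "h i z = 0" unfolding h_def by simp
      show "\<forall>x y. \<bar>h i x - h i y\<bar> \<le> dist x y"
      proof (intro allI)
        fix x y
        have "\<bar>dist x (fst (uv i)) - dist y (fst (uv i))\<bar> \<le> dist x y"
          using abs_dist_diff_le[of x "fst (uv i)" y] by (simp add: dist_commute)
        then show "\<bar>h i x - h i y\<bar> \<le> dist x y" unfolding h_def by linarith
      qed
    qed
    have hg: "1/2 \<le> lip_dist UNIV dist (h i) (\<lambda>_. 0)" for i
    proof -
      let ?u = "fst (uv i)" and ?v = "snd (uv i)"
      have "\<bar>h i ?u - h i ?v\<bar> / dist ?u ?v \<le> lip_dist UNIV dist (h i) (\<lambda>_. 0)"
        using val_ratio[OF hl[THEN conjunct1]] uv[of i] by blast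
      moreover have "\<bar>h i ?u - h i ?v\<bar> = dist ?u ?v" unfolding h_def using uv[of i] epos[of i]
        by (simp add: dist_commute)
      moreover have "dist ?u ?v > 0" using uv[of i] by simp
      ultimately show ?thesis by simp
    qed
    have hb: "\<bar>h i x\<bar> \<le> e i" for i x
    proof -
      have "0 \<le> dist x (fst (uv i))" "0 \<le> dist z (fst (uv i))" by simp_all
      then show ?thesis unfolding h_def using epos[of i] by (rule maxlem)
    qed
    have et: "(e \<longlongrightarrow> 0) F"
    proof (rule tendstoI)
      fix eps :: real assume eps: "eps > 0"
      have "eventually (\<lambda>i. nat \<lceil>1/eps\<rceil> \<le> r i) F" using r by blast
      then show "eventually (\<lambda>i. dist (e i) 0 < eps) F"
      proof (rule eventually_mono)
        fix i assume "nat \<lceil>1/eps\<rceil> \<le> r i"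
        then have "1/eps < real (r i) + 1" by linarith
        then have "1 < eps * (real (r i) + 1)" using eps by (simp add: field_simps)
        then show "dist (e i) 0 < eps" unfolding e_def using eps by (simp add: field_simps)
      qed
    qed
    have ht: "((\<lambda>i. h i (x i)) \<longlongrightarrow> 0) F" for x
      by (rule Lim_null_comparison[OF always_eventually et]) (use hb in simp)
    have "\<forall>i. h i \<in> Lip0 UNIV dist z \<and> lip_dist UNIV dist (h i) (\<lambda>_. 0) \<le> 1
     \<and> 1/2 \<le> lip_dist UNIV dist (h i) (\<lambda>_. 0)" using hl hg by blast
    moreover have "\<forall>x\<in>ult_linf UNIV dist z. ((\<lambda>i. h i (x i)) \<longlongrightarrow> 0) F" using ht by blast
    ultimately show ?thesis by (intro exI[of _ h] conjI)
  qed
qed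

lemma partB:
  assumes ci: "countably_incomplete F" and inj: "inj_on (opT F z) (LipU F z)"
  shows "uniformly_discrete (UNIV::'a set) \<and> bounded (UNIV::'a set)"
proof (rule ccontr)
  assume nd: "\<not> ?thesis"
  obtain h :: "'i \<Rightarrow> 'a \<Rightarrow> real" where h: "\<forall>i. h i \<in> Lip0 UNIV dist z \<and> lip_dist UNIV dist (h i) (\<lambda>_. 0) \<le> 1
     \<and> 1/2 \<le> lip_dist UNIV dist (h i) (\<lambda>_. 0)"
    and ht: "\<forall>x\<in>ult_linf UNIV dist z. ((\<lambda>i. h i (x i)) \<longlongrightarrow> 0) F"
    using h_exists[OF ci nd] by blast
  let ?LL = "ult_linf (Lip0 UNIV dist z) (lip_dist UNIV dist) (\<lambda>_::'a. 0::real)"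
  let ?cl = "ult_class F (Lip0 UNIV dist z) (lip_dist UNIV dist) (\<lambda>_. 0)"
  have hL: "h \<in> ?LL" unfolding ult_linf_def using h by blast
  have zL: "(\<lambda>_. \<lambda>_. 0) \<in> ?LL" unfolding ult_linf_def using zero_Lip0[of z] L.drefl[OF zero_Lip0] by auto
  have "1/2 \<le> ult_pdist F (lip_dist UNIV dist) h (\<lambda>_. \<lambda>_. 0)"
    by (rule tendsto_lowerbound[OF L.pd_tends[OF hL zL]]) (use h M.Fb in \<open>auto intro: always_eventually\<close>)
  then have "?cl h \<noteq> ?cl (\<lambda>_. \<lambda>_. 0)" using L.cls_eq_iff[OF hL zL] by simp
  moreover have "?cl h \<in> LipU F z" "?cl (\<lambda>_. \<lambda>_. 0) \<in> LipU F z" using hL zL unfolding ult_space_def by auto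
  moreover have "opT F z (?cl h) = opT F z (?cl (\<lambda>_. \<lambda>_. 0))"
  proof
    fix \<xi>
    show "opT F z (?cl h) \<xi> = opT F z (?cl (\<lambda>_. \<lambda>_. 0)) \<xi>"
    proof (cases "\<xi> \<in> MU F z")
      case True
      then obtain x where x: "x \<in> ult_linf UNIV dist z" "\<xi> = ult_class F UNIV dist z x"
        unfolding ult_space_def by auto
      have "opT F z (?cl h) \<xi> = Lim F (\<lambda>i. h i (x i))" using opT_cls[OF hL x(1)] x(2) by simp
      also have "\<dots> = 0" using ht x(1) M.Fb by (simp add: tendsto_Lim)
      also have "\<dots> = Lim F (\<lambda>i. (0::real))" using M.Fb by (simp add: tendsto_Lim)
      also have "\<dots> = opT F z (?cl (\<lambda>_. \<lambda>_. 0)) \<xi>" using opT_cls[OF zL x(1)] x(2) by simp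
      finally show ?thesis .
    next
      case False
      then show ?thesis unfolding opT_def by simp
    qed
  qed
  ultimately show False using inj unfolding inj_on_def by blast
qed


lemma sup_approx:
  assumes f: "f \<in> Lip0 UNIV dist z" and g: "g \<in> Lip0 UNIV dist z" and eps: "0 < eps"
  shows "lip_dist UNIV dist f g < eps \<or> (\<exists>u v::'a. u \<noteq> v \<and>
     lip_dist UNIV dist f g - eps < \<bar>(f u - g u) - (f v - g v)\<bar> / dist u v)"
proof -
  let ?X = "insert 0 {\<bar>(f x - g x) - (f y - g y)\<bar> / dist x y | x y. x \<in> (UNIV::'a set) \<and> y \<in> UNIV \<and> dist x y \<noteq> 0}"
  have ld: "lip_dist UNIV dist f g = Sup ?X" unfolding lip_dist_def lip_const_def by simp
  obtain L where L: "\<forall>x\<in>UNIV. \<forall>y\<in>UNIV. \<bar>(f x - g x) - (f y - g y)\<bar> \<le> L * dist x y"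
    using Lip0_diff[OF f g] by blast
  have bdd: "bdd_above ?X" using lip_bdd[of UNIV "\<lambda>x. f x - g x" L dist, OF L dist_nn] by simp
  have "lip_dist UNIV dist f g - eps < Sup ?X" using ld eps by simp
  then obtain r where r: "r \<in> ?X" "lip_dist UNIV dist f g - eps < r"
    using less_cSup_iff[OF _ bdd] by blast
  show ?thesis
  proof (cases "r = 0")
    case True then show ?thesis using r by simp
  next
    case False
    then obtain u v :: 'a where "dist u v \<noteq> 0" "r = \<bar>(f u - g u) - (f v - g v)\<bar> / dist u v"
      using r(1) by blast
    then show ?thesis using r(2) by auto
  qed
qed

lemma partC:
  assumes ud: "uniformly_discrete (UNIV::'a set)" and bd: "bounded (UNIV::'a set)"
    and c1: "c1 \<in> LipU F z" and c2: "c2 \<in> LipU F z"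
  shows "lip_dist (MU F z) (dMU F) (opT F z c1) (opT F z c2) = dLipU F c1 c2"
proof -
  obtain \<delta> where dpos: "\<delta> > 0" and dsep: "\<forall>x y::'a. x \<noteq> y \<longrightarrow> \<delta> \<le> dist x y"
    using ud unfolding uniformly_discrete_def by blast
  obtain a :: 'a and e where ae: "\<forall>y\<in>UNIV. dist a y \<le> e" using bd unfolding bounded_def by blast
  have Dz: "dist x z \<le> e + dist a z" for x
  proof -
    have "dist x z \<le> dist x a + dist a z" by (rule dist_triangle)
    moreover have "dist x a \<le> e" using ae[rule_format, of x] by (simp add: dist_commute)
    ultimately show ?thesis by linarith
  qed
  have allML: "x \<in> ult_linf UNIV dist z" for x :: "'i \<Rightarrow> 'a"
    unfolding ult_linf_def using Dz by blast
  let ?LL = "ult_linf (Lip0 UNIV dist z) (lip_dist UNIV dist) (\<lambda>_::'a. 0::real)"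
  let ?clL = "ult_class F (Lip0 UNIV dist z) (lip_dist UNIV dist) (\<lambda>_::'a. 0::real)"
  define f1 where "f1 = (SOME f. f \<in> c1)"
  define f2 where "f2 = (SOME f. f \<in> c2)"
  have f1: "f1 \<in> ?LL" "?clL f1 = c1" using L.rep[OF c1] unfolding f1_def by auto
  have f2: "f2 \<in> ?LL" "?clL f2 = c2" using L.rep[OF c2] unfolding f2_def by auto
  define \<Lambda> where "\<Lambda> = dLipU F c1 c2"
  have \<Lambda>': "\<Lambda> = ult_pdist F (lip_dist UNIV dist) f1 f2" unfolding \<Lambda>_def ult_dist_def f1_def f2_def ..
  have \<Lambda>t: "((\<lambda>i. lip_dist UNIV dist (f1 i) (f2 i)) \<longlongrightarrow> \<Lambda>) F" unfolding \<Lambda>' by (rule L.pd_tends[OF f1(1) f2(1)])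
  have \<Lambda>nn: "0 \<le> \<Lambda>" unfolding \<Lambda>' by (rule L.pd_nn[OF f1(1) f2(1)])
  define G where "G \<xi> = opT F z c1 \<xi> - opT F z c2 \<xi>" for \<xi>
  define xr where "xr \<xi> = (SOME x. x \<in> \<xi>)" for \<xi> :: "('i \<Rightarrow> 'a) set"
  have Gt: "((\<lambda>i. f1 i (xr \<xi> i) - f2 i (xr \<xi> i)) \<longlongrightarrow> G \<xi>) F" if "\<xi> \<in> MU F z" for \<xi>
  proof -
    have "opT F z c1 \<xi> = Lim F (\<lambda>i. f1 i (xr \<xi> i))" "opT F z c2 \<xi> = Lim F (\<lambda>i. f2 i (xr \<xi> i))"
      unfolding opT_def f1_def f2_def xr_def using that by simp_all
    then show ?thesis unfolding G_def
      by (simp add: tendsto_diff[OF eval_tends[OF f1(1) allML] eval_tends[OF f2(1) allML]])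
  qed
  have Dt: "((\<lambda>i. dist (xr \<xi> i) (xr \<eta> i)) \<longlongrightarrow> dMU F \<xi> \<eta>) F" for \<xi> \<eta>
    unfolding ult_dist_def xr_def by (rule M.pd_tends[OF allML allML])
  have dnn: "\<forall>\<xi>\<in>MU F z. \<forall>\<eta>\<in>MU F z. 0 \<le> dMU F \<xi> \<eta>"
    unfolding ult_dist_def by (auto intro: M.pd_nn[OF allML allML])
  have up: "\<forall>\<xi>\<in>MU F z. \<forall>\<eta>\<in>MU F z. \<bar>G \<xi> - G \<eta>\<bar> \<le> \<Lambda> * dMU F \<xi> \<eta>"
  proof (intro ballI)
    fix \<xi> \<eta> assume \<xi>: "\<xi> \<in> MU F z" and \<eta>: "\<eta> \<in> MU F z"
    show "\<bar>G \<xi> - G \<eta>\<bar> \<le> \<Lambda> * dMU F \<xi> \<eta>"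
    proof (rule tendsto_le[OF M.Fb tendsto_mult[OF \<Lambda>t Dt] tendsto_rabs[OF tendsto_diff[OF Gt[OF \<xi>] Gt[OF \<eta>]]]])
      show "eventually (\<lambda>i. \<bar>(f1 i (xr \<xi> i) - f2 i (xr \<xi> i)) - (f1 i (xr \<eta> i) - f2 i (xr \<eta> i))\<bar>
          \<le> lip_dist UNIV dist (f1 i) (f2 i) * dist (xr \<xi> i) (xr \<eta> i)) F"
        by (rule always_eventually) (auto intro: lipd_bound[OF L.linfS[OF f1(1)] L.linfS[OF f2(1)]])
    qed
  qed
  have le1: "lip_const (MU F z) (dMU F) G \<le> \<Lambda>" by (rule lip_least[OF \<Lambda>nn up dnn])
  have Gnn: "0 \<le> lip_const (MU F z) (dMU F) G" by (rule lip_nn[OF up dnn])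
  have ge1: "\<Lambda> \<le> lip_const (MU F z) (dMU F) G"
  proof (rule field_le_epsilon)
    fix eps :: real assume eps: "0 < eps"
    define P where "P i \<longleftrightarrow> (\<exists>u v::'a. u \<noteq> v \<and> lip_dist UNIV dist (f1 i) (f2 i) - eps
         < \<bar>(f1 i u - f2 i u) - (f1 i v - f2 i v)\<bar> / dist u v)" for i
    have alt: "P i \<or> lip_dist UNIV dist (f1 i) (f2 i) < eps" for i
      using sup_approx[OF L.linfS[OF f1(1)] L.linfS[OF f2(1)] eps] unfolding P_def by blast
    have "eventually P F \<or> eventually (\<lambda>i. \<not> P i) F" using U unfolding is_ultrafilter_def by blast
    then show "\<Lambda> \<le> lip_const (MU F z) (dMU F) G + eps"
    proof
      assume "eventually (\<lambda>i. \<not> P i) F"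
      then have "eventually (\<lambda>i. lip_dist UNIV dist (f1 i) (f2 i) \<le> eps) F"
        by (rule eventually_mono) (use alt in \<open>auto intro: less_imp_le\<close>)
      then have "\<Lambda> \<le> eps" by (rule tendsto_upperbound[OF \<Lambda>t]) (simp add: M.Fb)
      then show ?thesis using Gnn by linarith
    next
      assume evP: "eventually P F"
      have "\<forall>i. \<exists>p::'a\<times>'a. P i \<longrightarrow> (fst p \<noteq> snd p \<and> lip_dist UNIV dist (f1 i) (f2 i) - eps
         < \<bar>(f1 i (fst p) - f2 i (fst p)) - (f1 i (snd p) - f2 i (snd p))\<bar> / dist (fst p) (snd p))"
      proof
        fix i
        show "\<exists>p::'a\<times>'a. P i \<longrightarrow> (fst p \<noteq> snd p \<and> lip_dist UNIV dist (f1 i) (f2 i) - eps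
         < \<bar>(f1 i (fst p) - f2 i (fst p)) - (f1 i (snd p) - f2 i (snd p))\<bar> / dist (fst p) (snd p))"
        proof (cases "P i")
          case True
          then obtain u v :: 'a where "u \<noteq> v \<and> lip_dist UNIV dist (f1 i) (f2 i) - eps
             < \<bar>(f1 i u - f2 i u) - (f1 i v - f2 i v)\<bar> / dist u v" unfolding P_def by blast
          then show ?thesis by (intro exI[of _ "(u, v)"]) simp
        qed simp
      qed
      from choice[OF this] obtain uv :: "'i \<Rightarrow> 'a \<times> 'a" where uv: "\<forall>i. P i \<longrightarrow> (fst (uv i) \<noteq> snd (uv i) \<and>
         lip_dist UNIV dist (f1 i) (f2 i) - eps
         < \<bar>(f1 i (fst (uv i)) - f2 i (fst (uv i))) - (f1 i (snd (uv i)) - f2 i (snd (uv i)))\<bar> / dist (fst (uv i)) (snd (uv i)))"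
        by blast
      define u where "u i = fst (uv i)" for i
      define v where "v i = snd (uv i)" for i
      let ?clM = "ult_class F UNIV dist z"
      have \<xi>: "?clM u \<in> MU F z" using allML unfolding ult_space_def by blast
      have \<eta>: "?clM v \<in> MU F z" using allML unfolding ult_space_def by blast
      have Gu: "G (?clM u) = Lim F (\<lambda>i. f1 i (u i)) - Lim F (\<lambda>i. f2 i (u i))"
        unfolding G_def using opT_cls[OF f1(1) allML, of u] opT_cls[OF f2(1) allML, of u] f1(2) f2(2) by simp
      have Gv: "G (?clM v) = Lim F (\<lambda>i. f1 i (v i)) - Lim F (\<lambda>i. f2 i (v i))"
        unfolding G_def using opT_cls[OF f1(1) allML, of v] opT_cls[OF f2(1) allML, of v] f1(2) f2(2) by simp
      have At: "((\<lambda>i. \<bar>(f1 i (u i) - f2 i (u i)) - (f1 i (v i) - f2 i (v i))\<bar>) \<longlongrightarrow> \<bar>G (?clM u) - G (?clM v)\<bar>) F"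
        unfolding Gu Gv
        by (intro tendsto_rabs tendsto_diff eval_tends f1(1) f2(1) allML)
      have dd: "dMU F (?clM u) (?clM v) = ult_pdist F dist u v" by (rule M.udist_cls[OF allML allML])
      have duv: "((\<lambda>i. dist (u i) (v i)) \<longlongrightarrow> dMU F (?clM u) (?clM v)) F"
        unfolding dd by (rule M.pd_tends[OF allML allML])
      have evd: "eventually (\<lambda>i. \<delta> \<le> dist (u i) (v i)) F"
        by (rule eventually_mono[OF evP]) (use uv dsep in \<open>auto simp: u_def v_def\<close>)
      have dpos': "\<delta> \<le> dMU F (?clM u) (?clM v)" by (rule tendsto_lowerbound[OF duv evd]) (simp add: M.Fb)
      then have dgt: "0 < dMU F (?clM u) (?clM v)" using dpos by linarith
      have evl: "eventually (\<lambda>i. (lip_dist UNIV dist (f1 i) (f2 i) - eps) * dist (u i) (v i)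
          \<le> \<bar>(f1 i (u i) - f2 i (u i)) - (f1 i (v i) - f2 i (v i))\<bar>) F"
      proof (rule eventually_mono[OF evP])
        fix i assume "P i"
        then have ne: "u i \<noteq> v i" and lt: "lip_dist UNIV dist (f1 i) (f2 i) - eps
          < \<bar>(f1 i (u i) - f2 i (u i)) - (f1 i (v i) - f2 i (v i))\<bar> / dist (u i) (v i)"
          using uv unfolding u_def v_def by blast+
        have "0 < dist (u i) (v i)" using ne by simp
        then show "(lip_dist UNIV dist (f1 i) (f2 i) - eps) * dist (u i) (v i)
          \<le> \<bar>(f1 i (u i) - f2 i (u i)) - (f1 i (v i) - f2 i (v i))\<bar>"
          using lt by (simp add: less_divide_eq)
      qed
      have "(\<Lambda> - eps) * dMU F (?clM u) (?clM v) \<le> \<bar>G (?clM u) - G (?clM v)\<bar>"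
        by (rule tendsto_le[OF M.Fb At tendsto_mult[OF tendsto_diff[OF \<Lambda>t tendsto_const] duv] evl])
      then have "\<Lambda> - eps \<le> \<bar>G (?clM u) - G (?clM v)\<bar> / dMU F (?clM u) (?clM v)"
        using dgt by (simp add: le_divide_eq)
      also have "\<dots> \<le> lip_const (MU F z) (dMU F) G"
        by (rule lip_ratio[OF up dnn \<xi> \<eta>]) (use dgt in simp)
      finally show ?thesis by linarith
    qed
  qed
  have "lip_dist (MU F z) (dMU F) (opT F z c1) (opT F z c2) = lip_const (MU F z) (dMU F) G"
    unfolding lip_dist_def G_def ..
  then show ?thesis using le1 ge1 \<Lambda>_def by linarith
qed

end

theorem proposition3p2:
  fixes F :: "'i filter" and z :: "'a::metric_space"
  assumes "is_ultrafilter F" and "countably_incomplete F"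
  shows "((uniformly_discrete (UNIV::'a set) \<and> bounded (UNIV::'a set))
            \<longleftrightarrow> inj_on (opT F z) (LipU F z))
       \<and> (inj_on (opT F z) (LipU F z)
            \<longleftrightarrow> (\<forall>c1\<in>LipU F z. \<forall>c2\<in>LipU F z.
                   lip_dist (MU F z) (dMU F) (opT F z c1) (opT F z c2) = dLipU F c1 c2))"
proof -
  interpret S: setting F z by (rule setting.intro[OF assms(1)])
  have C: "uniformly_discrete (UNIV::'a set) \<and> bounded (UNIV::'a set) \<Longrightarrow>
      (\<forall>c1\<in>LipU F z. \<forall>c2\<in>LipU F z.
                   lip_dist (MU F z) (dMU F) (opT F z c1) (opT F z c2) = dLipU F c1 c2)"
    using S.partC by blast
  have A: "(\<forall>c1\<in>LipU F z. \<forall>c2\<in>LipU F z.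
                   lip_dist (MU F z) (dMU F) (opT F z c1) (opT F z c2) = dLipU F c1 c2) \<Longrightarrow>
      inj_on (opT F z) (LipU F z)" by (rule S.partA)
  have B: "inj_on (opT F z) (LipU F z) \<Longrightarrow> uniformly_discrete (UNIV::'a set) \<and> bounded (UNIV::'a set)"
    by (rule S.partB[OF assms(2)])
  show ?thesis using A B C by blast
qed

end
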